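(* Let $\omega_0,\alpha,\omega_d,h,H>0$, $J_0=\begin{bmatrix}0&\omega_0\\-\omega_0&0\end{bmatrix}$, $\tilde\Lambda=\begin{bmatrix}0&0\\0&-\frac{\alpha}{2}\end{bmatrix}$. Then the origin of the system on $\mathbb{R}\times\mathbb{R}^2\times\mathbb{R}$ $$\dot r=-hr+H\bar z^\top(J_0+\tilde\Lambda e^{\hat d})\bar z,\qquad \dot{\bar z}=(J_0+\tilde\Lambda)\bar z+(e^{\hat d}-1)\tilde\Lambda\bar z,\qquad \dot{\hat d}=-\omega_d(e^{\hat d}-1)$$ is globally uniformly asymptotically stable. *)

theory Defs
  imports "HOL-Analysis.Analysis"
begin

text \<open>A solution of the autonomous ODE x' = f x on the forward interval [t0, \<infinity>).\<close>
definition is_solution :: "('a::real_normed_vector \<Rightarrow> 'a) \<Rightarrow> real \<Rightarrow> (real \<Rightarrow> 'a) \<Rightarrow> bool" where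
  "is_solution f t0 x \<longleftrightarrow>
     (\<forall>t\<ge>t0. (x has_vector_derivative f (x t)) (at t within {t0..}))"

text \<open>Global uniform asymptotic stability of the origin (Khalil-style):
  the origin is an equilibrium, solutions exist forward in time from every initial state,
  uniform stability, uniform global boundedness, uniform global attractivity.\<close>
definition GUAS :: "('a::real_normed_vector \<Rightarrow> 'a) \<Rightarrow> bool" where
  "GUAS f \<longleftrightarrow>
     f 0 = 0 \<and>
     (\<forall>t0 x0. \<exists>x. x t0 = x0 \<and> is_solution f t0 x) \<and>
     (\<forall>\<epsilon>>0. \<exists>\<delta>>0. \<forall>t0 x. is_solution f t0 x \<and> norm (x t0) < \<delta> \<longrightarrow>
                             (\<forall>t\<ge>t0. norm (x t) < \<epsilon>)) \<and>
     (\<forall>c>0. \<exists>B. \<forall>t0 x. is_solution f t0 x \<and> norm (x t0) < c \<longrightarrow>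
                             (\<forall>t\<ge>t0. norm (x t) \<le> B)) \<and>
     (\<forall>c>0. \<forall>\<eta>>0. \<exists>T\<ge>0. \<forall>t0 x. is_solution f t0 x \<and> norm (x t0) < c \<longrightarrow>
                             (\<forall>t\<ge>t0 + T. norm (x t) < \<eta>))"

definition J0 :: "real \<Rightarrow> real^2^2" where
  "J0 \<omega>0 = vector [vector [0, \<omega>0], vector [- \<omega>0, 0]]"

definition LambdaT :: "real \<Rightarrow> real^2^2" where
  "LambdaT \<alpha> = vector [vector [0, 0], vector [0, - \<alpha> / 2]]"

text \<open>The vector field on R \<times> R^2 \<times> R, state (r, z, d).\<close>
definition sysf :: "real \<Rightarrow> real \<Rightarrow> real \<Rightarrow> real \<Rightarrow> real \<Rightarrow>
                    real \<times> (real^2) \<times> real \<Rightarrow> real \<times> (real^2) \<times> real" where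
  "sysf \<omega>0 \<alpha> \<omega>d h H = (\<lambda>(r, z, d).
     (- h * r + H * (z \<bullet> ((J0 \<omega>0 + exp d *\<^sub>R LambdaT \<alpha>) *v z)),
      (J0 \<omega>0 + LambdaT \<alpha>) *v z + (exp d - 1) *\<^sub>R (LambdaT \<alpha> *v z),
      - \<omega>d * (exp d - 1)))"

end

theory Submission
  imports Defs "HOL-Real_Asymp.Real_Asymp"
begin

lemma mv_comp:
  fixes z :: "real^2"
  shows "((J0 w + e *\<^sub>R LambdaT a) *v z) $ 1 = w * z$2"
    and "((J0 w + e *\<^sub>R LambdaT a) *v z) $ 2 = - w * z$1 - e * a / 2 * z$2"
  by (simp_all add: J0_def LambdaT_def matrix_vector_mult_def sum_2)
lemma mv_comp':
  fixes z :: "real^2"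
  shows "((J0 w + LambdaT a) *v z + (e - 1) *\<^sub>R (LambdaT a *v z)) = (J0 w + e *\<^sub>R LambdaT a) *v z"
  by (simp add: vec_eq_iff forall_2 J0_def LambdaT_def matrix_vector_mult_def sum_2 algebra_simps)
lemma inner2: fixes x y :: "real^2" shows "x \<bullet> y = x$1 * y$1 + x$2 * y$2"
  by (simp add: inner_vec_def sum_2)
lemma norm2: fixes x :: "real^2" shows "(norm x)^2 = (x$1)^2 + (x$2)^2"
  by (simp only: power2_norm_eq_inner inner2) (simp add: power2_eq_square)

lemma comps:
  assumes sol: "is_solution (sysf w a wd h H) t0 x" and xe: "\<And>t. x t = (r t, z t, d t)" and t: "t \<ge> t0"
  shows "(r has_real_derivative (-h * r t - H * (a/2) * exp (d t) * (z t $ 2)^2)) (at t within {t0..})"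
   "((\<lambda>t. z t $ 1) has_real_derivative (w * z t $ 2)) (at t within {t0..})"
   "((\<lambda>t. z t $ 2) has_real_derivative (- w * z t $ 1 - exp (d t) * a / 2 * z t $ 2)) (at t within {t0..})"
   "(d has_real_derivative (- wd * (exp (d t) - 1))) (at t within {t0..})"
proof -
  have D: "(x has_vector_derivative sysf w a wd h H (x t)) (at t within {t0..})"
    using sol t unfolding is_solution_def by auto
  have xr: "x = (\<lambda>t. (r t, z t, d t))" using xe by auto
  have val: "sysf w a wd h H (x t) = (-h * r t - H * (a/2) * exp (d t) * (z t $ 2)^2,
      (J0 w + exp (d t) *\<^sub>R LambdaT a) *v z t, - wd * (exp (d t) - 1))"
  proof -
    have "z t \<bullet> ((J0 w + exp (d t) *\<^sub>R LambdaT a) *v z t) = -(a/2)*exp(d t)*(z t$2)^2"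
      by (simp only: inner2 mv_comp) (simp add: algebra_simps power2_eq_square)
    then show ?thesis unfolding xe sysf_def by (simp only: split mv_comp') (simp add: algebra_simps)
  qed
  have fx: "(\<lambda>t. fst (x t)) = r" "(\<lambda>t. fst (snd (x t))) = z" "(\<lambda>t. snd (snd (x t))) = d"
    by (auto simp: xe)
  note D = D[unfolded val]
  have D1: "(r has_vector_derivative (-h * r t - H * (a/2) * exp (d t) * (z t $ 2)^2)) (at t within {t0..})"
    using bounded_linear.has_vector_derivative[OF bounded_linear_fst D] unfolding fx by simp
  have D2: "(z has_vector_derivative ((J0 w + exp (d t) *\<^sub>R LambdaT a) *v z t)) (at t within {t0..})"
    using bounded_linear.has_vector_derivative[OF bounded_linear_fst 
       bounded_linear.has_vector_derivative[OF bounded_linear_snd D]] unfolding fx by simp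
  have D3: "(d has_vector_derivative (- wd * (exp (d t) - 1))) (at t within {t0..})"
    using bounded_linear.has_vector_derivative[OF bounded_linear_snd 
       bounded_linear.has_vector_derivative[OF bounded_linear_snd D]] unfolding fx by simp
  show "(r has_real_derivative (-h * r t - H * (a/2) * exp (d t) * (z t $ 2)^2)) (at t within {t0..})"
    using D1 by (simp add: has_real_derivative_iff_has_vector_derivative)
  show "(d has_real_derivative (- wd * (exp (d t) - 1))) (at t within {t0..})"
    using D3 by (simp add: has_real_derivative_iff_has_vector_derivative)
  show "((\<lambda>t. z t $ 1) has_real_derivative (w * z t $ 2)) (at t within {t0..})"
    using bounded_linear.has_vector_derivative[OF bounded_linear_vec_nth D2, of 1]
    by (simp add: has_real_derivative_iff_has_vector_derivative mv_comp)
  show "((\<lambda>t. z t $ 2) has_real_derivative (- w * z t $ 1 - exp (d t) * a / 2 * z t $ 2)) (at t within {t0..})"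
    using bounded_linear.has_vector_derivative[OF bounded_linear_vec_nth D2, of 2]
    by (simp add: has_real_derivative_iff_has_vector_derivative mv_comp)
qed

lemma nonincr:
  fixes W W' :: "real \<Rightarrow> real"
  assumes D: "\<And>t. t \<ge> a \<Longrightarrow> (W has_real_derivative W' t) (at t within {a..})"
    and N: "\<And>t. t \<ge> a \<Longrightarrow> W' t \<le> 0" and "a \<le> s" "s \<le> t"
  shows "W t \<le> W s"
proof -
  have "\<exists>x\<in>{s..t}. W t - W s = (\<lambda>h. W' x * h) (t - s)"
  proof (rule mvt_very_simple)
    fix x assume "s \<le> x" "x \<le> t"
    then have "(W has_real_derivative W' x) (at x within {s..t})"
      using D[of x] assms(3) by (auto intro: DERIV_subset)
    then show "(W has_derivative (\<lambda>h. W' x * h)) (at x within {s..t})"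
      by (simp add: has_field_derivative_def)
  qed (use assms in auto)
  then obtain x where "x \<in> {s..t}" "W t - W s = W' x * (t - s)" by auto
  moreover have "W' x \<le> 0" using N[of x] \<open>x \<in> {s..t}\<close> assms by auto
  then have "W' x * (t - s) \<le> 0" using assms by (simp add: mult_nonpos_nonneg)
  ultimately show ?thesis by linarith
qed

lemma decay:
  fixes V V' :: "real \<Rightarrow> real"
  assumes D: "\<And>t. t \<ge> a \<Longrightarrow> (V has_real_derivative V' t) (at t within {a..})"
    and N: "\<And>t. t \<ge> a \<Longrightarrow> V' t \<le> - c * V t" and "a \<le> t"
  shows "V t \<le> V a * exp (- c * (t - a))"
proof -
  define W where "W t = V t * exp (c * (t - a))" for t
  have d1: "(W has_real_derivative (V' t + c * V t) * exp (c * (t - a))) (at t within {a..})"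
     and d2: "(V' t + c * V t) * exp (c * (t - a)) \<le> 0" if "a \<le> t" for t
  proof -
    show "(W has_real_derivative (V' t + c * V t) * exp (c * (t - a))) (at t within {a..})"
      unfolding W_def using D[OF that]
      by (auto intro!: derivative_eq_intros simp: algebra_simps)
    show "(V' t + c * V t) * exp (c * (t - a)) \<le> 0"
      using N[OF that] by (simp add: mult_nonpos_nonneg)
  qed
  have "W t \<le> W a" by (rule nonincr[OF d1 d2]) (use assms in auto)
  then have "V t * exp (c * (t - a)) \<le> V a" by (simp add: W_def)
  then have "V t * exp (c * (t - a)) * exp (- c * (t - a)) \<le> V a * exp (- c * (t - a))"
    by (simp add: mult_right_mono)
  then show ?thesis by (simp add: mult.assoc exp_add[symmetric])
qed


lemma const_of_deriv0:
  fixes W :: "real \<Rightarrow> real"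
  assumes D: "\<And>t. t \<ge> a \<Longrightarrow> (W has_real_derivative 0) (at t within {a..})" and "a \<le> t"
  shows "W t = W a"
proof -
  have "W t \<le> W a" by (rule nonincr[OF D]) (use assms in auto)
  moreover have "- W t \<le> - W a"
    by (rule nonincr[where W="\<lambda>t. - W t" and W'="\<lambda>_. 0"]) (use assms in \<open>auto intro!: derivative_eq_intros\<close>)
  ultimately show ?thesis by linarith
qed

lemma d_formula:
  fixes d :: "real \<Rightarrow> real"
  assumes D: "\<And>t. t \<ge> t0 \<Longrightarrow> (d has_real_derivative (- wd * (exp (d t) - 1))) (at t within {t0..})"
    and "t0 \<le> t"
  shows "exp (- d t) - 1 = (exp (- d t0) - 1) * exp (- wd * (t - t0))"
proof -
  define W where "W t = (exp (- d t) - 1) * exp (wd * (t - t0))" for t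
  have "W t = W t0"
  proof (rule const_of_deriv0[where a=t0])
    fix s assume s: "t0 \<le> s"
    have "(W has_real_derivative (exp (- d s) * (- (- wd * (exp (d s) - 1)))) * exp (wd * (s - t0))
        + (exp (- d s) - 1) * (wd * exp (wd * (s - t0)))) (at s within {t0..})"
      unfolding W_def using D[OF s] by (auto intro!: derivative_eq_intros)
    moreover have "(exp (- d s) * (- (- wd * (exp (d s) - 1)))) * exp (wd * (s - t0))
        + (exp (- d s) - 1) * (wd * exp (wd * (s - t0))) = 0"
      by (simp add: algebra_simps exp_minus field_simps)
    ultimately show "(W has_real_derivative 0) (at s within {t0..})" by simp
  qed (use assms in auto)
  then have "(exp (- d t) - 1) * exp (wd * (t - t0)) = exp (- d t0) - 1" by (simp add: W_def)
  then have "(exp (- d t) - 1) * exp (wd * (t - t0)) * exp (- wd * (t - t0)) = (exp (- d t0) - 1) * exp (- wd * (t - t0))"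
    by simp
  then show ?thesis by (simp add: mult.assoc exp_add[symmetric])
qed

lemma d_bounds:
  fixes d :: "real \<Rightarrow> real"
  assumes D: "\<And>t. t \<ge> t0 \<Longrightarrow> (d has_real_derivative (- wd * (exp (d t) - 1))) (at t within {t0..})"
    and wd: "wd > 0" and t: "t0 \<le> t"
  shows "\<bar>d t\<bar> \<le> \<bar>d t0\<bar>"
    and "\<bar>d t\<bar> \<le> (exp \<bar>d t0\<bar> + 1) * exp \<bar>d t0\<bar> * exp (- wd * (t - t0))"
proof -
  define q where "q = exp (- wd * (t - t0))"
  define c where "c = \<bar>d t0\<bar>"
  have q: "0 < q" "q \<le> 1" using wd t by (auto simp: q_def)
  have u: "exp (- d t) = (1 - q) * 1 + q * exp (- d t0)"
    using d_formula[OF D t] by (simp add: q_def algebra_simps)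
  have u0: "exp (- c) \<le> exp (- d t0)" "exp (- d t0) \<le> exp c" by (auto simp: c_def)
  have one: "exp (- c) \<le> 1" "1 \<le> exp c" by (auto simp: c_def)
  have lo: "exp (- c) \<le> exp (- d t)"
  proof -
    have "exp (-c) = (1 - q) * exp (-c) + q * exp (-c)" by (simp add: algebra_simps)
    also have "\<dots> \<le> (1 - q) * 1 + q * exp (- d t0)"
      using q u0 one by (intro add_mono mult_left_mono) auto
    finally show ?thesis using u by simp
  qed
  have hi: "exp (- d t) \<le> exp c"
  proof -
    have "exp (- d t) \<le> (1 - q) * exp c + q * exp c"
      unfolding u using q u0 one by (intro add_mono mult_left_mono) auto
    also have "\<dots> = exp c" by (simp add: algebra_simps)
    finally show ?thesis .
  qed
  show "\<bar>d t\<bar> \<le> \<bar>d t0\<bar>" using lo hi unfolding c_def by auto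
  have u1: "\<bar>exp (- d t) - 1\<bar> \<le> (exp c + 1) * q"
  proof -
    have "exp (- d t) - 1 = (exp (- d t0) - 1) * q" using u by (simp add: algebra_simps)
    then have "\<bar>exp (- d t) - 1\<bar> = \<bar>exp (- d t0) - 1\<bar> * q" using q by (simp add: abs_mult)
    also have "\<dots> \<le> (exp c + 1) * q"
    proof (rule mult_right_mono)
      show "\<bar>exp (- d t0) - 1\<bar> \<le> exp c + 1"
        using u0(2) exp_gt_zero[of "- d t0"] by (simp only: abs_le_iff) linarith
    qed (use q in auto)
    finally show ?thesis .
  qed
  have ec: "1 \<le> exp c" by (simp add: c_def)
  show "\<bar>d t\<bar> \<le> (exp \<bar>d t0\<bar> + 1) * exp \<bar>d t0\<bar> * exp (- wd * (t - t0))"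
  proof (cases "d t \<le> 0")
    case True
    have "- d t \<le> exp (- d t) - 1" using exp_ge_add_one_self[of "- d t"] by linarith
    also have "\<dots> \<le> (exp c + 1) * q" using u1 by simp
    also have "\<dots> \<le> (exp c + 1) * exp c * q"
    proof -
      have "(exp c + 1) * q * 1 \<le> (exp c + 1) * q * exp c"
        using ec q by (intro mult_left_mono) auto
      then show ?thesis by (simp add: algebra_simps)
    qed
    finally show ?thesis using True by (simp add: c_def q_def)
  next
    case False
    have "d t \<le> exp (d t) - 1" using exp_ge_add_one_self[of "d t"] by linarith
    also have "exp (d t) - 1 = (1 - exp (- d t)) * exp (d t)" by (simp add: algebra_simps exp_minus)
    also have "\<dots> \<le> ((exp c + 1) * q) * exp c"
    proof (rule mult_mono)
      show "1 - exp (- d t) \<le> (exp c + 1) * q" using u1 by simp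
      show "exp (d t) \<le> exp c" using lo by (simp add: c_def)
    qed (use q in auto)
    finally show ?thesis using False by (simp add: c_def q_def algebra_simps)
  qed
qed


lemma quad:
  fixes x y A w amin amax \<epsilon> :: real
  assumes w: "w > 0" and A: "amin \<le> A" "A \<le> amax" and am: "0 < amin"
    and e: "0 < \<epsilon>" "\<epsilon> \<le> amin / (2*w)" "\<epsilon> \<le> w / amax"
  shows "2 * x * (w * y) + 2 * y * (- w * x - A * y) + \<epsilon> * ((w * y) * y + x * (- w * x - A * y))
     \<le> - (min amin (\<epsilon> * w / 2)) * (x^2 + y^2)"
proof -
  have h1: "0 \<le> \<epsilon> / (2*w) * (w * x + A * y)^2" using e w by simp
  have h1': "\<epsilon> / (2*w) * (w * x + A * y)^2 = \<epsilon>*w/2 * x^2 + \<epsilon> * A * (x*y) + \<epsilon> * A * A / (2*w) * y^2"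
    using w by (simp add: power2_eq_square field_simps)
  have h2: "\<epsilon> * w \<le> A / 2" using e w A by (simp add: field_simps)
  have amx: "0 < amax" using am A by linarith
  have h3a: "\<epsilon> * A \<le> w"
  proof -
    have "\<epsilon> * A \<le> \<epsilon> * amax" using A e by (intro mult_left_mono) auto
    also have "\<dots> \<le> w" using e amx by (simp add: field_simps)
    finally show ?thesis .
  qed
  have h3: "\<epsilon> * A * A / (2*w) \<le> A / 2"
  proof -
    have "\<epsilon> * A * A \<le> w * A" using h3a A am by (intro mult_right_mono) auto
    then show ?thesis using w by (simp add: field_simps)
  qed
  have y2: "0 \<le> y^2" "0 \<le> x^2" by auto
  have h2y: "\<epsilon> * w * y^2 \<le> (A * y^2) / 2"
  proof -
    have "\<epsilon> * w * y^2 \<le> A / 2 * y^2" using h2 y2 by (intro mult_right_mono) auto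
    then show ?thesis by simp
  qed
  have h3y: "\<epsilon> * A * A / (2*w) * y^2 \<le> (A * y^2) / 2"
  proof -
    have "\<epsilon> * A * A / (2*w) * y^2 \<le> A / 2 * y^2" using h3 y2 by (intro mult_right_mono) auto
    then show ?thesis by simp
  qed
  have hA: "min amin (\<epsilon> * w / 2) * y^2 \<le> A * y^2" using A y2 by (intro mult_right_mono) auto
  have hx: "min amin (\<epsilon> * w / 2) * x^2 \<le> (\<epsilon> * w * x^2) / 2"
  proof -
    have "min amin (\<epsilon> * w / 2) * x^2 \<le> \<epsilon> * w / 2 * x^2" using y2 by (intro mult_right_mono) auto
    then show ?thesis by simp
  qed
  have h1'': "0 \<le> (\<epsilon> * w * x^2) / 2 + \<epsilon> * A * (x*y) + \<epsilon> * A * A / (2*w) * y^2"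
    using h1 h1' by simp
  have expand: "2 * x * (w * y) + 2 * y * (- w * x - A * y) + \<epsilon> * ((w * y) * y + x * (- w * x - A * y))
     = - 2 * (A * y^2) + \<epsilon> * w * y^2 - \<epsilon> * w * x^2 - \<epsilon> * A * (x * y)"
    by (simp add: algebra_simps power2_eq_square)
  have rhs: "- (min amin (\<epsilon> * w / 2)) * (x^2 + y^2) = - (min amin (\<epsilon> * w / 2) * x^2) - (min amin (\<epsilon> * w / 2) * y^2)"
    by (simp add: algebra_simps)
  show ?thesis unfolding expand rhs using h1'' h2y h3y hA hx by linarith
qed

lemma cross_bound:
  fixes x y \<epsilon> :: real
  assumes "0 \<le> \<epsilon>"
  shows "\<bar>\<epsilon> * x * y\<bar> \<le> \<epsilon> / 2 * (x^2 + y^2)"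
proof -
  have "2 * \<bar>x * y\<bar> \<le> x^2 + y^2"
    using sum_squares_bound[of "\<bar>x\<bar>" "\<bar>y\<bar>"] by (simp add: abs_mult)
  then have "\<epsilon> * (2 * \<bar>x * y\<bar>) \<le> \<epsilon> * (x^2 + y^2)" using assms by (intro mult_left_mono) auto
  then show ?thesis using assms by (simp add: abs_mult field_simps)
qed

lemma z_mono:
  fixes z1 z2 A :: "real \<Rightarrow> real"
  assumes D1: "\<And>t. t \<ge> t0 \<Longrightarrow> (z1 has_real_derivative (w * z2 t)) (at t within {t0..})"
    and D2: "\<And>t. t \<ge> t0 \<Longrightarrow> (z2 has_real_derivative (- w * z1 t - A t * z2 t)) (at t within {t0..})"
    and Apos: "\<And>t. t \<ge> t0 \<Longrightarrow> A t \<ge> 0" and "t0 \<le> s" "s \<le> t"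
  shows "(z1 t)^2 + (z2 t)^2 \<le> (z1 s)^2 + (z2 s)^2"
proof -
  have d1: "((\<lambda>t. (z1 t)^2 + (z2 t)^2) has_real_derivative - 2 * A t * (z2 t)^2) (at t within {t0..})"
    and d2: "- 2 * A t * (z2 t)^2 \<le> 0" if t: "t0 \<le> t" for t
  proof -
    show "((\<lambda>t. (z1 t)^2 + (z2 t)^2) has_real_derivative - 2 * A t * (z2 t)^2) (at t within {t0..})"
      using D1[OF t] D2[OF t] by (auto intro!: derivative_eq_intros simp: algebra_simps power2_eq_square)
    show "- 2 * A t * (z2 t)^2 \<le> 0" using Apos[OF t] by simp
  qed
  show ?thesis using nonincr[OF d1 d2, of s t] assms by auto
qed

lemma z_decay:
  fixes z1 z2 A :: "real \<Rightarrow> real"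
  assumes D1: "\<And>t. t \<ge> t0 \<Longrightarrow> (z1 has_real_derivative (w * z2 t)) (at t within {t0..})"
    and D2: "\<And>t. t \<ge> t0 \<Longrightarrow> (z2 has_real_derivative (- w * z1 t - A t * z2 t)) (at t within {t0..})"
    and Ab: "\<And>t. t \<ge> t0 \<Longrightarrow> amin \<le> A t \<and> A t \<le> amax"
    and w: "w > 0" and am: "0 < amin"
    and e: "0 < \<epsilon>" "\<epsilon> \<le> 1/2" "\<epsilon> \<le> amin / (2*w)" "\<epsilon> \<le> w / amax"
    and t: "t0 \<le> t"
  shows "(z1 t)^2 + (z2 t)^2 \<le> 5/3 * ((z1 t0)^2 + (z2 t0)^2) * exp (- (4/5 * min amin (\<epsilon> * w / 2)) * (t - t0))"
proof -
  define \<kappa> where "\<kappa> = min amin (\<epsilon> * w / 2)"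
  have kp: "\<kappa> > 0" using am e w by (simp add: \<kappa>_def)
  define N where "N t = (z1 t)^2 + (z2 t)^2" for t
  define V where "V t = (z1 t)^2 + (z2 t)^2 + \<epsilon> * z1 t * z2 t" for t
  have VN: "3/4 * N t \<le> V t" "V t \<le> 5/4 * N t" for t
  proof -
    have cb: "\<bar>\<epsilon> * z1 t * z2 t\<bar> \<le> \<epsilon> / 2 * N t" using cross_bound[of \<epsilon> "z1 t" "z2 t"] e by (simp add: N_def)
    have "\<epsilon> / 2 * N t \<le> 1/4 * N t" using e by (intro mult_right_mono) (auto simp: N_def)
    then show "3/4 * N t \<le> V t" "V t \<le> 5/4 * N t" using cb unfolding V_def N_def by (auto simp: abs_le_iff)
  qed
  have dd1: "(V has_real_derivative 2 * z1 s * (w * z2 s) + 2 * z2 s * (- w * z1 s - A s * z2 s) + \<epsilon> * ((w * z2 s) * z2 s + z1 s * (- w * z1 s - A s * z2 s))) (at s within {t0..})"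
   and dd2: "2 * z1 s * (w * z2 s) + 2 * z2 s * (- w * z1 s - A s * z2 s) + \<epsilon> * ((w * z2 s) * z2 s + z1 s * (- w * z1 s - A s * z2 s)) \<le> - (4/5 * \<kappa>) * V s"
   if s: "t0 \<le> s" for s
  proof -
    show "(V has_real_derivative 2 * z1 s * (w * z2 s) + 2 * z2 s * (- w * z1 s - A s * z2 s) + \<epsilon> * ((w * z2 s) * z2 s + z1 s * (- w * z1 s - A s * z2 s))) (at s within {t0..})"
      unfolding V_def using D1[OF s] D2[OF s] by (auto intro!: derivative_eq_intros simp: algebra_simps power2_eq_square)
    have "2 * z1 s * (w * z2 s) + 2 * z2 s * (- w * z1 s - A s * z2 s) + \<epsilon> * ((w * z2 s) * z2 s + z1 s * (- w * z1 s - A s * z2 s)) \<le> - \<kappa> * N s"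
      unfolding \<kappa>_def N_def using quad[OF w _ _ am e(1) e(3) e(4), of "A s" "z1 s" "z2 s"] Ab[OF s] by auto
    also have "\<dots> \<le> - (4/5 * \<kappa>) * V s"
    proof -
      have "\<kappa> * (4/5 * V s) \<le> \<kappa> * N s" using VN[of s] kp by (intro mult_left_mono) auto
      then show ?thesis by (simp add: algebra_simps)
    qed
    finally show "2 * z1 s * (w * z2 s) + 2 * z2 s * (- w * z1 s - A s * z2 s) + \<epsilon> * ((w * z2 s) * z2 s + z1 s * (- w * z1 s - A s * z2 s)) \<le> - (4/5 * \<kappa>) * V s" .
  qed
  have "V t \<le> V t0 * exp (- (4/5 * \<kappa>) * (t - t0))" by (rule decay[OF dd1 dd2 t])
  also have "\<dots> \<le> 5/4 * N t0 * exp (- (4/5 * \<kappa>) * (t - t0))"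
    using VN[of t0] by (intro mult_right_mono) auto
  finally have "V t \<le> 5/4 * N t0 * exp (- (4/5 * \<kappa>) * (t - t0))" .
  then have "3/4 * N t \<le> 5/4 * N t0 * exp (- (4/5 * \<kappa>) * (t - t0))" using VN[of t] by linarith
  then show ?thesis unfolding N_def \<kappa>_def by (simp add: field_simps)
qed


lemma r_bound:
  fixes r N Q :: "real \<Rightarrow> real"
  assumes Dr: "\<And>t. t \<ge> t0 \<Longrightarrow> (r has_real_derivative (- h * r t - H * Q t)) (at t within {t0..})"
    and DN: "\<And>t. t \<ge> t0 \<Longrightarrow> (N has_real_derivative (- 2 * Q t)) (at t within {t0..})"
    and Qp: "\<And>t. t \<ge> t0 \<Longrightarrow> Q t \<ge> 0" and Np: "\<And>t. t \<ge> t0 \<Longrightarrow> N t \<ge> 0"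
    and h: "h > 0" and H: "H > 0" and t1: "t0 \<le> t1" and t: "t1 \<le> t"
  shows "\<bar>r t - H/2 * N t\<bar> \<le> \<bar>r t1 - H/2 * N t1\<bar> * exp (- h * (t - t1)) + H/2 * N t1"
proof -
  define W where "W t = r t - H/2 * N t" for t
  have DW: "(W has_real_derivative (- h * (W s + H/2 * N s))) (at s within {t1..})" if s: "t1 \<le> s" for s
  proof -
    have F: "(W has_real_derivative (- h * r s - H * Q s) - H/2 * (- 2 * Q s)) (at s within {t0..})"
      unfolding W_def using Dr[of s] DN[of s] s t1 by (auto intro!: derivative_eq_intros)
    have E: "(- h * r s - H * Q s) - H/2 * (- 2 * Q s) = - h * (W s + H/2 * N s)"
      by (simp add: W_def algebra_simps)
    have "(W has_real_derivative (- h * (W s + H/2 * N s))) (at s within {t0..})" using F unfolding E .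
    then show ?thesis by (rule DERIV_subset) (use t1 in auto)
  qed
  have Nmono: "N s \<le> N t1" if "t1 \<le> s" for s
  proof -
    have "N s \<le> N t1"
      by (rule nonincr[where a=t0 and W'="\<lambda>t. - 2 * Q t", OF DN]) (use Qp t1 that in auto)
    then show ?thesis .
  qed
  have up: "W t \<le> W t1 * exp (- h * (t - t1))"
  proof (rule decay[OF DW])
    fix s assume s: "t1 \<le> s"
    have "0 \<le> h * (H/2 * N s)" using h H Np[of s] s t1 by simp
    then show "- h * (W s + H/2 * N s) \<le> - h * W s" by (simp add: algebra_simps)
  qed (use t in auto)
  define U where "U t = - (W t + H/2 * N t1)" for t
  have DU: "(U has_real_derivative (h * (W s + H/2 * N s))) (at s within {t1..})" if s: "t1 \<le> s" for s
    unfolding U_def using DW[OF s] by (auto intro!: derivative_eq_intros)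
  have lo: "U t \<le> U t1 * exp (- h * (t - t1))"
  proof (rule decay[OF DU])
    fix s assume s: "t1 \<le> s"
    have "h * (H/2 * N s) \<le> h * (H/2 * N t1)" using Nmono[OF s] h H by simp
    then show "h * (W s + H/2 * N s) \<le> - h * U s" by (simp add: U_def algebra_simps)
  qed (use t in auto)
  have e: "0 < exp (- h * (t - t1))" "exp (- h * (t - t1)) \<le> 1" using h t by auto
  have N1: "0 \<le> N t1" using Np t1 by auto
  have "W t \<le> \<bar>W t1\<bar> * exp (- h * (t - t1)) + H/2 * N t1"
  proof -
    have "W t1 * exp (- h * (t - t1)) \<le> \<bar>W t1\<bar> * exp (- h * (t - t1))"
      using e by (intro mult_right_mono) auto
    moreover have "0 \<le> H/2 * N t1" using N1 H by simp
    ultimately show ?thesis using up by linarith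
  qed
  moreover have "- W t \<le> \<bar>W t1\<bar> * exp (- h * (t - t1)) + H/2 * N t1"
  proof -
    have "U t1 * exp (- h * (t - t1)) = - (W t1 * exp (- h * (t - t1))) - H/2 * N t1 * exp (- h * (t - t1))"
      by (simp add: U_def algebra_simps)
    moreover have "- (W t1 * exp (- h * (t - t1))) \<le> \<bar>W t1\<bar> * exp (- h * (t - t1))"
    proof -
      have "- W t1 * exp (- h * (t - t1)) \<le> \<bar>W t1\<bar> * exp (- h * (t - t1))"
        using e by (intro mult_right_mono) auto
      then show ?thesis by simp
    qed
    moreover have "0 \<le> H/2 * N t1 * exp (- h * (t - t1))" using N1 H e by simp
    ultimately show ?thesis using lo by (simp add: U_def)
  qed
  ultimately show ?thesis unfolding W_def by linarith
qed


fun picard :: "(real \<Rightarrow> 'a::banach \<Rightarrow> 'a) \<Rightarrow> real \<Rightarrow> 'a \<Rightarrow> nat \<Rightarrow> real \<Rightarrow> 'a" where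
  "picard L t0 y0 0 = (\<lambda>t. y0)"
| "picard L t0 y0 (Suc n) = (\<lambda>t. integral {t0..t} (\<lambda>s. L s (picard L t0 y0 n s)))"

lemma lin_exist:
  fixes L :: "real \<Rightarrow> 'a::banach \<Rightarrow> 'a"
  assumes lin: "\<And>t. t \<ge> t0 \<Longrightarrow> linear (L t)"
    and bnd: "\<And>t x. t \<ge> t0 \<Longrightarrow> norm (L t x) \<le> K * norm x"
    and K: "K \<ge> 0"
    and cont: "\<And>y b. continuous_on {t0..b} y \<Longrightarrow> continuous_on {t0..b} (\<lambda>t. L t (y t))"
  shows "\<exists>y. y t0 = y0 \<and> (\<forall>t\<ge>t0. (y has_vector_derivative L t (y t)) (at t within {t0..}))"
proof -
  define \<phi> where "\<phi> = picard L t0 y0"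
  have phi0: "\<phi> 0 = (\<lambda>t. y0)" and phiS: "\<phi> (Suc n) = (\<lambda>t. integral {t0..t} (\<lambda>s. L s (\<phi> n s)))" for n
    by (simp_all add: \<phi>_def)
  have cont_phi: "continuous_on {t0..b} (\<phi> n)" for n b
  proof (induction n)
    case 0 then show ?case by (simp add: phi0)
  next
    case (Suc n)
    have "continuous_on {t0..b} (\<lambda>s. L s (\<phi> n s))" by (rule cont[OF Suc])
    then show ?case unfolding phiS
      by (intro indefinite_integral_continuous_1 integrable_continuous_real)
  qed
  have der_phi: "(\<phi> (Suc n) has_vector_derivative L x (\<phi> n x)) (at x within {t0..b})"
    if "t0 \<le> x" "x \<le> b" for n x b
    unfolding phiS using that by (intro integral_has_vector_derivative cont cont_phi) auto
  have bnd_phi: "norm (\<phi> n t) \<le> norm y0 * (K * (t - t0))^n / fact n" if "t0 \<le> t" for n t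
    using that
  proof (induction n arbitrary: t)
    case 0 then show ?case by (simp add: phi0)
  next
    case (Suc n)
    define g where "g s = K * (norm y0 * (K * (s - t0))^n / fact n)" for s
    define G where "G s = norm y0 * (K * (s - t0))^(Suc n) / fact (Suc n)" for s
    have "continuous_on {t0..t} (\<lambda>s. L s (\<phi> n s))" by (rule cont[OF cont_phi])
    then have i1: "(\<lambda>s. L s (\<phi> n s)) integrable_on {t0..t}" by (rule integrable_continuous_real)
    have gc: "continuous_on {t0..t} g" unfolding g_def by (intro continuous_intros) auto
    then have i2: "g integrable_on {t0..t}" by (rule integrable_continuous_real)
    have le: "norm (L s (\<phi> n s)) \<le> g s" if "s \<in> {t0..t}" for s
    proof -
      have "norm (L s (\<phi> n s)) \<le> K * norm (\<phi> n s)" using bnd that by auto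
      also have "\<dots> \<le> g s" unfolding g_def using Suc.IH[of s] that K by (intro mult_left_mono) auto
      finally show ?thesis .
    qed
    have GD: "(G has_vector_derivative g s) (at s within {t0..t})" for s
    proof -
      have d0: "((\<lambda>s. K*(s-t0)) has_real_derivative K) (at s within {t0..t})"
        by (auto intro!: derivative_eq_intros)
      have d1: "((\<lambda>s. (K*(s-t0))^(Suc n)) has_real_derivative (real (Suc n) * (K*(s-t0))^n * K)) (at s within {t0..t})"
        using DERIV_power[OF d0, of "Suc n"] by (simp add: mult_ac)
      have d2: "(G has_real_derivative (norm y0 / fact (Suc n)) * (real (Suc n) * (K*(s-t0))^n * K)) (at s within {t0..t})"
        unfolding G_def using DERIV_cmult[OF d1, of "norm y0 / fact (Suc n)"] by (simp add: field_simps)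
      have "(norm y0 / fact (Suc n)) * (real (Suc n) * (K*(s-t0))^n * K) = g s"
      proof -
        have nz: "(fact n::real) \<noteq> 0" "(1 + real n) \<noteq> 0" "fact n + fact n * real n \<noteq> 0"
        proof -
          have p: "(fact n::real) > 0" by simp
          have "fact n * real n \<ge> 0" using p by simp
          then show "(fact n::real) \<noteq> 0" "(1 + real n) \<noteq> 0" "fact n + fact n * real n \<noteq> 0"
            using p by linarith+
        qed
        show ?thesis unfolding g_def fact_Suc using nz by (simp add: field_simps)
      qed
      then have "(G has_real_derivative g s) (at s within {t0..t})" using d2 by simp
      then show ?thesis by (simp add: has_real_derivative_iff_has_vector_derivative)
    qed
    have "(g has_integral (G t - G t0)) {t0..t}"
      by (rule fundamental_theorem_of_calculus) (use Suc.prems GD in auto)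
    then have "integral {t0..t} g = G t" by (simp add: G_def integral_unique)
    moreover have "norm (integral {t0..t} (\<lambda>s. L s (\<phi> n s))) \<le> integral {t0..t} g"
      by (rule Henstock_Kurzweil_Integration.integral_norm_bound_integral[OF i1 i2 le])
    ultimately show ?case by (simp add: phiS G_def)
  qed

  define G where "G x = suminf (\<lambda>n. \<phi> n x)" for x
  define D where "D n x = (case n of 0 \<Rightarrow> 0 | Suc m \<Rightarrow> L x (\<phi> m x))" for n x
  have derG: "(G has_vector_derivative L x (G x)) (at x within {t0..b})" if x: "t0 \<le> x" "x \<le> b" for x b
  proof -
    define M where "M n = norm y0 * (K * (b - t0))^n / fact n" for n
    have summ: "summable M"
    proof -
      have "summable (\<lambda>n. (K * (b - t0))^n /\<^sub>R fact n)" using exp_converges by (rule sums_summable)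
      then have "summable (\<lambda>n. norm y0 * ((K * (b - t0))^n /\<^sub>R fact n))" by (rule summable_mult)
      then show ?thesis unfolding M_def by (simp add: divide_inverse mult_ac)
    qed
    have Mb: "norm (\<phi> n s) \<le> M n" if "s \<in> {t0..b}" for n s
    proof -
      have "norm (\<phi> n s) \<le> norm y0 * (K * (s - t0))^n / fact n" using bnd_phi that by auto
      also have "\<dots> \<le> M n" unfolding M_def using that K
        by (intro divide_right_mono mult_left_mono power_mono mult_left_mono) auto
      finally show ?thesis .
    qed
    have ul: "uniform_limit {t0..b} (\<lambda>n x. \<Sum>i<n. \<phi> i x) G sequentially"
      unfolding G_def by (rule Weierstrass_m_test[OF Mb summ])
    have Dsum: "(\<Sum>i<Suc m. D i s) = L s (\<Sum>i<m. \<phi> i s)" if "t0 \<le> s" for m s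
    proof -
      have "(\<Sum>i<Suc m. D i s) = (\<Sum>i<m. D (Suc i) s) + D 0 s" using sum.lessThan_Suc_shift[of "\<lambda>i. D i s" m] by (simp add: add.commute)
      also have "\<dots> = (\<Sum>i<m. L s (\<phi> i s))" by (simp add: D_def)
      also have "\<dots> = L s (\<Sum>i<m. \<phi> i s)" using linear_sum[OF lin[OF that], of "\<lambda>i. \<phi> i s" "{..<m}"] by simp
      finally show ?thesis .
    qed
    have phi_t0: "(\<lambda>n. \<phi> n t0) = (\<lambda>n. if n = 0 then y0 else 0)"
    proof
      fix n show "\<phi> n t0 = (if n = 0 then y0 else 0)" by (cases n) (simp_all add: phi0 phiS)
    qed
    have sums0: "(\<lambda>n. \<phi> n t0) sums y0" unfolding phi_t0 using sums_single[of 0 "\<lambda>_. y0"] by simp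
    have "\<exists>g. \<forall>x\<in>{t0..b}. (\<lambda>n. \<phi> n x) sums (g x) \<and> (g has_derivative (\<lambda>h. h *\<^sub>R L x (G x))) (at x within {t0..b})"
    proof (rule has_derivative_series[where f'="\<lambda>n x h. h *\<^sub>R D n x"])
      show "convex {t0..b}" by simp
      show "(\<phi> n has_derivative (\<lambda>h. h *\<^sub>R D n x)) (at x within {t0..b})" if "x \<in> {t0..b}" for n x
      proof (cases n)
        case 0 then show ?thesis by (simp add: D_def phi0)
      next
        case (Suc m) then show ?thesis using der_phi[of x b m] that
          by (simp add: D_def has_vector_derivative_def)
      qed
      show "\<forall>\<^sub>F n in sequentially. \<forall>x\<in>{t0..b}. \<forall>h. norm ((\<Sum>i<n. h *\<^sub>R D i x) - h *\<^sub>R L x (G x)) \<le> e * norm h"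
        if e: "e > 0" for e
      proof -
        have "e / (K + 1) > 0" using e K by simp
        then obtain N where N: "\<And>n x. n \<ge> N \<Longrightarrow> x \<in> {t0..b} \<Longrightarrow> dist (\<Sum>i<n. \<phi> i x) (G x) < e / (K + 1)"
          using ul unfolding uniform_limit_sequentially_iff by blast
        show ?thesis unfolding eventually_sequentially
        proof (intro exI[of _ "Suc N"] allI impI ballI)
          fix n x h assume n: "Suc N \<le> n" and xs: "x \<in> {t0..b}"
          then obtain m where m: "n = Suc m" "m \<ge> N" by (cases n) auto
          have "(\<Sum>i<n. h *\<^sub>R D i x) = h *\<^sub>R (\<Sum>i<Suc m. D i x)"
            using m(1) by (simp only: scaleR_sum_right)
          also have "\<dots> = h *\<^sub>R L x (\<Sum>i<m. \<phi> i x)" using Dsum[of x m] xs by simp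
          finally have "(\<Sum>i<n. h *\<^sub>R D i x) - h *\<^sub>R L x (G x) = h *\<^sub>R (L x (\<Sum>i<m. \<phi> i x) - L x (G x))"
            by (simp add: scaleR_diff_right)
          also have "L x (\<Sum>i<m. \<phi> i x) - L x (G x) = L x ((\<Sum>i<m. \<phi> i x) - G x)"
            using linear_diff[OF lin, of x] xs by simp
          finally have "(\<Sum>i<n. h *\<^sub>R D i x) - h *\<^sub>R L x (G x) = h *\<^sub>R (L x ((\<Sum>i<m. \<phi> i x) - G x))" .
          then have "norm ((\<Sum>i<n. h *\<^sub>R D i x) - h *\<^sub>R L x (G x)) = norm h * norm (L x ((\<Sum>i<m. \<phi> i x) - G x))"
            by simp
          also have "\<dots> \<le> norm h * (K * norm ((\<Sum>i<m. \<phi> i x) - G x))"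
            using bnd xs by (intro mult_left_mono) auto
          also have "\<dots> \<le> norm h * e"
          proof (intro mult_left_mono)
            have "norm ((\<Sum>i<m. \<phi> i x) - G x) \<le> e / (K + 1)" using N[OF m(2) xs] by (simp add: dist_norm)
            then have "K * norm ((\<Sum>i<m. \<phi> i x) - G x) \<le> K * (e / (K + 1))" using K by (intro mult_left_mono)
            also have "\<dots> \<le> e" using K e by (simp add: field_simps)
            finally show "K * norm ((\<Sum>i<m. \<phi> i x) - G x) \<le> e" .
          qed simp
          finally show "norm ((\<Sum>i<n. h *\<^sub>R D i x) - h *\<^sub>R L x (G x)) \<le> e * norm h" by (simp add: mult.commute)
        qed
      qed
      show "t0 \<in> {t0..b}" using x by simp
      show "(\<lambda>n. \<phi> n t0) sums y0" by (rule sums0)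
    qed
    then obtain g where g: "\<And>x. x \<in> {t0..b} \<Longrightarrow> (\<lambda>n. \<phi> n x) sums (g x) \<and> (g has_derivative (\<lambda>h. h *\<^sub>R L x (G x))) (at x within {t0..b})"
      by blast
    have gG: "G s = g s" if "s \<in> {t0..b}" for s using g[OF that] unfolding G_def by (simp add: sums_iff)
    have "(G has_derivative (\<lambda>h. h *\<^sub>R L x (G x))) (at x within {t0..b})"
      by (rule has_derivative_transform[where f=g]) (use x gG g in auto)
    then show ?thesis by (simp add: has_vector_derivative_def)
  qed
  have "G t0 = y0"
  proof -
    have "(\<lambda>n. \<phi> n t0) = (\<lambda>n. if n = 0 then y0 else 0)"
    proof
      fix n show "\<phi> n t0 = (if n = 0 then y0 else 0)" by (cases n) (simp_all add: phi0 phiS)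
    qed
    then show ?thesis unfolding G_def using sums_single[of 0 "\<lambda>_. y0"] by (simp add: sums_iff)
  qed
  moreover have "(G has_vector_derivative L t (G t)) (at t within {t0..})" if t: "t0 \<le> t" for t
  proof -
    have "at t within {t0..t+1} = at t within {t0..}"
      by (rule at_within_nhd[where S="{..<t+1}"]) auto
    then show ?thesis using derG[of t "t+1"] t by simp
  qed
  ultimately show ?thesis by blast
qed


definition zeps :: "real \<Rightarrow> real \<Rightarrow> real \<Rightarrow> real" where
  "zeps w a c = min (1/2) (min ((exp (-c) * a / 2) / (2*w)) (w / (exp c * a / 2)))"
definition zlam :: "real \<Rightarrow> real \<Rightarrow> real \<Rightarrow> real" where
  "zlam w a c = 4/5 * min (exp (-c) * a / 2) (zeps w a c * w / 2)"

lemma zeps_pos: "w > 0 \<Longrightarrow> a > 0 \<Longrightarrow> zeps w a c > 0"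
  by (simp add: zeps_def)
lemma zlam_pos: "w > 0 \<Longrightarrow> a > 0 \<Longrightarrow> zlam w a c > 0"
  using zeps_pos[of w a c] by (simp add: zlam_def)

lemma nfst: "norm (fst p) \<le> norm p" using norm_fst_le[of "fst p" "snd p"] by simp
lemma nsnd: "norm (snd p) \<le> norm p" using norm_snd_le[of "snd p" "fst p"] by simp
lemma npair: "norm p \<le> norm (fst p) + norm (snd p)" using norm_Pair_le[of "fst p" "snd p"] by simp

lemma sol_est:
  fixes w a wd h H :: real
  assumes pos: "w > 0" "a > 0" "wd > 0" "h > 0" "H > 0"
    and sol: "is_solution (sysf w a wd h H) t0 x"
  shows "t0 \<le> t \<Longrightarrow> norm (x t) \<le> 3 * norm (x t0) + 3*H/2 * (norm (x t0))^2"
    and "norm (x t0) < c \<Longrightarrow> t0 \<le> t1 \<Longrightarrow> t1 \<le> t \<Longrightarrow> norm (x t) \<le>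
          (exp c + 1) * exp c * exp (- wd * (t - t0)) + sqrt (5/3 * c^2 * exp (- zlam w a c * (t - t0)))
          + ((c + 2*H*c^2) * exp (- h * (t - t1)) + H * (5/3 * c^2 * exp (- zlam w a c * (t1 - t0))))"
proof -
  define r where "r t = fst (x t)" for t
  define z where "z t = fst (snd (x t))" for t
  define d where "d t = snd (snd (x t))" for t
  have xe: "x t = (r t, z t, d t)" for t by (simp add: r_def z_def d_def)
  note C = comps[OF sol xe]
  define N where "N t = (z t $ 1)^2 + (z t $ 2)^2" for t
  define Q where "Q t = a/2 * exp (d t) * (z t $ 2)^2" for t
  have Nn: "N t = (norm (z t))^2" for t by (simp add: N_def norm2)
  have Dd: "\<And>t. t \<ge> t0 \<Longrightarrow> (d has_real_derivative (- wd * (exp (d t) - 1))) (at t within {t0..})"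
    using C(4) by auto
  have dabs: "\<bar>d t\<bar> \<le> \<bar>d t0\<bar>" if "t0 \<le> t" for t using d_bounds(1)[OF Dd pos(3) that] .
  have Nmono: "N t \<le> N s" if "t0 \<le> s" "s \<le> t" for s t
    unfolding N_def
    by (rule z_mono[where A="\<lambda>t. exp (d t) * a / 2", OF C(2) C(3)]) (use that pos in auto)
  have Np: "N t \<ge> 0" for t by (simp add: N_def)
  have Qp: "Q t \<ge> 0" for t using pos by (simp add: Q_def)
  have DN: "(N has_real_derivative (- 2 * Q t)) (at t within {t0..})" if "t0 \<le> t" for t
  proof -
    have "(N has_real_derivative 2 * z t $ 1 * (w * z t $ 2) + 2 * z t $ 2 * (- w * z t $ 1 - exp (d t) * a / 2 * z t $ 2)) (at t within {t0..})"
      unfolding N_def[abs_def] using C(2)[OF that] C(3)[OF that]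
      by (auto intro!: derivative_eq_intros simp: power2_eq_square)
    moreover have "2 * z t $ 1 * (w * z t $ 2) + 2 * z t $ 2 * (- w * z t $ 1 - exp (d t) * a / 2 * z t $ 2) = - 2 * Q t"
      by (simp add: Q_def algebra_simps power2_eq_square)
    ultimately show ?thesis by simp
  qed
  have Dr: "(r has_real_derivative (- h * r t - H * Q t)) (at t within {t0..})" if "t0 \<le> t" for t
    using C(1)[OF that] by (simp add: Q_def mult_ac)
  have rb: "\<bar>r t - H/2 * N t\<bar> \<le> \<bar>r t1 - H/2 * N t1\<bar> * exp (- h * (t - t1)) + H/2 * N t1"
    if "t0 \<le> t1" "t1 \<le> t" for t1 t
    by (rule r_bound[OF Dr DN Qp Np pos(4) pos(5) that])
  define n0 where "n0 = norm (x t0)"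
  have r0: "\<bar>r t0\<bar> \<le> n0" unfolding n0_def r_def using nfst[of "x t0"] by simp
  have z0: "norm (z t0) \<le> n0" unfolding n0_def z_def using nfst[of "snd (x t0)"] nsnd[of "x t0"] by simp
  have d0: "\<bar>d t0\<bar> \<le> n0" unfolding n0_def d_def using nsnd[of "snd (x t0)"] nsnd[of "x t0"] by simp
  have N0: "N t0 \<le> n0^2" unfolding Nn using z0 by (simp add: power_mono)
  have nx: "norm (x t) \<le> \<bar>r t\<bar> + norm (z t) + \<bar>d t\<bar>" for t
  proof -
    have "norm (x t) \<le> norm (r t) + norm (z t, d t)" using npair[of "x t"] by (simp add: xe)
    also have "norm (z t, d t) \<le> norm (z t) + norm (d t)" by (rule norm_Pair_le)
    finally show ?thesis by simp
  qed
  have rabs: "\<bar>r t\<bar> \<le> \<bar>r t0\<bar> + 3*H/2 * N t0" if "t0 \<le> t" for t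
  proof -
    have e: "exp (- h * (t - t0)) \<le> 1" using pos that by simp
    have "\<bar>r t - H/2 * N t\<bar> \<le> \<bar>r t0 - H/2 * N t0\<bar> * exp (- h * (t - t0)) + H/2 * N t0"
      using rb[of t0 t] that by simp
    also have "\<dots> \<le> \<bar>r t0 - H/2 * N t0\<bar> * 1 + H/2 * N t0"
      using e by (intro add_mono[OF mult_left_mono order_refl]) auto
    finally have a1: "\<bar>r t - H/2 * N t\<bar> \<le> \<bar>r t0 - H/2 * N t0\<bar> + H/2 * N t0" by simp
    have "0 \<le> H/2 * N t" "H/2 * N t \<le> H/2 * N t0" "0 \<le> H/2 * N t0"
      using Nmono[of t0 t] that pos Np by auto
    then show ?thesis using a1 by (simp only: abs_le_iff) linarith
  qed
  have zabs: "norm (z t) \<le> norm (z s)" if "t0 \<le> s" "s \<le> t" for s t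
  proof -
    have "(norm (z t))^2 \<le> (norm (z s))^2" using Nmono[OF that] by (simp only: Nn)
    then show ?thesis by (rule power2_le_imp_le) simp
  qed
  show "t0 \<le> t \<Longrightarrow> norm (x t) \<le> 3 * norm (x t0) + 3*H/2 * (norm (x t0))^2"
  proof -
    assume t: "t0 \<le> t"
    have "3*H/2 * N t0 \<le> 3*H/2 * n0^2" using N0 pos by simp
    then show ?thesis unfolding n0_def[symmetric]
      using nx[of t] rabs[OF t] zabs[of t0 t] t dabs[OF t] r0 z0 d0 by linarith
  qed
  show "norm (x t0) < c \<Longrightarrow> t0 \<le> t1 \<Longrightarrow> t1 \<le> t \<Longrightarrow> norm (x t) \<le>
          (exp c + 1) * exp c * exp (- wd * (t - t0)) + sqrt (5/3 * c^2 * exp (- zlam w a c * (t - t0)))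
          + ((c + 2*H*c^2) * exp (- h * (t - t1)) + H * (5/3 * c^2 * exp (- zlam w a c * (t1 - t0))))"
  proof -
    assume c: "norm (x t0) < c" and t1: "t0 \<le> t1" and t: "t1 \<le> t"
    have n0c: "n0 < c" "0 \<le> n0" using c by (auto simp: n0_def)
    have dc: "\<bar>d t0\<bar> \<le> c" using d0 n0c by simp
    \<comment> \<open>d estimate\<close>
    have dest: "\<bar>d t\<bar> \<le> (exp c + 1) * exp c * exp (- wd * (t - t0))"
    proof -
      have "\<bar>d t\<bar> \<le> (exp \<bar>d t0\<bar> + 1) * exp \<bar>d t0\<bar> * exp (- wd * (t - t0))"
        using d_bounds(2)[OF Dd pos(3)] t1 t by simp
      also have "\<dots> \<le> (exp c + 1) * exp c * exp (- wd * (t - t0))"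
        using dc by (intro mult_right_mono mult_mono add_mono) auto
      finally show ?thesis .
    qed
    \<comment> \<open>z estimate\<close>
    have Nest: "N s \<le> 5/3 * c^2 * exp (- zlam w a c * (s - t0))" if s: "t0 \<le> s" for s
    proof -
      define amin where "amin = exp (-c) * a / 2"
      define amax where "amax = exp c * a / 2"
      define \<epsilon> where "\<epsilon> = zeps w a c"
      have Ab: "amin \<le> exp (d s') * a / 2 \<and> exp (d s') * a / 2 \<le> amax" if "t0 \<le> s'" for s'
      proof -
        have "\<bar>d s'\<bar> \<le> c" using dabs[OF that] dc by simp
        then have "exp (-c) \<le> exp (d s')" "exp (d s') \<le> exp c" by auto
        then show ?thesis unfolding amin_def amax_def using pos by (auto simp: divide_right_mono)
      qed
      have amp: "0 < amin" using pos by (simp add: amin_def)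
      have e: "0 < \<epsilon>" "\<epsilon> \<le> 1/2" "\<epsilon> \<le> amin / (2*w)" "\<epsilon> \<le> w / amax"
      proof -
        show "0 < \<epsilon>" using zeps_pos[OF pos(1,2), of c] by (simp add: \<epsilon>_def)
        show "\<epsilon> \<le> 1/2" unfolding \<epsilon>_def zeps_def by (rule min.cobounded1)
        show "\<epsilon> \<le> amin / (2*w)" unfolding \<epsilon>_def zeps_def amin_def by (rule min.coboundedI2, rule min.cobounded1)
        show "\<epsilon> \<le> w / amax" unfolding \<epsilon>_def zeps_def amax_def by (rule min.coboundedI2, rule min.cobounded2)
      qed
      have "N s \<le> 5/3 * N t0 * exp (- (4/5 * min amin (\<epsilon> * w / 2)) * (s - t0))"
        unfolding N_def by (rule z_decay[OF C(2) C(3) Ab pos(1) amp e s])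
      also have "\<dots> \<le> 5/3 * c^2 * exp (- (4/5 * min amin (\<epsilon> * w / 2)) * (s - t0))"
        using N0 n0c by (intro mult_right_mono mult_left_mono) (auto intro: order_trans[OF _ power_mono[of n0 c 2]])
      also have "4/5 * min amin (\<epsilon> * w / 2) = zlam w a c" by (simp add: zlam_def amin_def \<epsilon>_def)
      finally show ?thesis .
    qed
    have zest: "norm (z t) \<le> sqrt (5/3 * c^2 * exp (- zlam w a c * (t - t0)))"
      using Nest[of t] t1 t unfolding Nn by (simp add: real_le_rsqrt)
    \<comment> \<open>r estimate\<close>
    have rest: "\<bar>r t\<bar> \<le> (c + 2*H*c^2) * exp (- h * (t - t1)) + H * (5/3 * c^2 * exp (- zlam w a c * (t1 - t0)))"
    proof -
      have c2: "n0^2 \<le> c^2" using n0c by (simp add: power_mono)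
      have N1: "N t1 \<le> N t0" using Nmono[of t0 t1] t1 by simp
      have "\<bar>r t1 - H/2 * N t1\<bar> \<le> \<bar>r t1\<bar> + H/2 * N t1" 
      proof -
        have "0 \<le> H/2 * N t1" using pos Np[of t1] by simp
        then show ?thesis using abs_ge_self[of "r t1"] abs_ge_minus_self[of "r t1"] by (simp only: abs_le_iff) linarith
      qed
      also have "\<dots> \<le> c + 2*H*c^2"
      proof -
        have "H * N t0 \<le> H * c^2" using N0 c2 pos by simp
        moreover have "H/2 * N t1 \<le> H/2 * N t0" using N1 pos by simp
        ultimately show ?thesis using rabs[OF t1] r0 n0c by linarith
      qed
      finally have a1: "\<bar>r t1 - H/2 * N t1\<bar> \<le> c + 2*H*c^2" .
      have "\<bar>r t - H/2 * N t\<bar> \<le> \<bar>r t1 - H/2 * N t1\<bar> * exp (- h * (t - t1)) + H/2 * N t1"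
        using rb[OF t1 t] .
      also have "\<dots> \<le> (c + 2*H*c^2) * exp (- h * (t - t1)) + H/2 * N t1"
        using a1 by (intro add_mono[OF mult_right_mono order_refl]) auto
      finally have a2: "\<bar>r t - H/2 * N t\<bar> \<le> (c + 2*H*c^2) * exp (- h * (t - t1)) + H/2 * N t1" .
      have a3: "H/2 * N t \<le> H/2 * N t1" "0 \<le> H/2 * N t" using Nmono[OF t1 t] pos Np[of t] by auto
      have a4: "H * N t1 \<le> H * (5/3 * c^2 * exp (- zlam w a c * (t1 - t0)))" using Nest[OF t1] pos by simp
      show ?thesis using a2 a3 a4 abs_ge_self[of "r t - H/2 * N t"] abs_ge_minus_self[of "r t - H/2 * N t"] by (simp only: abs_le_iff) linarith
    qed
    show ?thesis using nx[of t] dest zest rest by linarith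
  qed
qed


lemma cont_from_deriv:
  fixes y :: "real \<Rightarrow> 'a::real_normed_vector"
  assumes "\<And>t. t \<ge> t0 \<Longrightarrow> (y has_vector_derivative D t) (at t within {t0..})"
  shows "continuous_on {t0..b} y"
proof -
  have "continuous_on {t0..} y"
    unfolding continuous_on_eq_continuous_within using assms has_vector_derivative_continuous by fastforce
  then show ?thesis by (rule continuous_on_subset) auto
qed

lemma exist_sol:
  fixes w a wd h H :: real
  assumes pos: "w > 0" "a > 0" "wd > 0" "h > 0" "H > 0"
  shows "\<exists>x. x t0 = x0 \<and> is_solution (sysf w a wd h H) t0 x"
proof -
  obtain r0 z0 d0 where x0: "x0 = (r0, z0, d0)" by (cases x0) auto
  define u where "u t = 1 + (exp (- d0) - 1) * exp (- wd * (t - t0))" for t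
  define d where "d t = - ln (u t)" for t
  have upos: "u t > 0" if "t0 \<le> t" for t
  proof -
    have q: "0 < exp (- wd * (t - t0))" "exp (- wd * (t - t0)) \<le> 1" using pos that by auto
    have "u t = (1 - exp (- wd * (t - t0))) + exp (- wd * (t - t0)) * exp (- d0)"
      by (simp add: u_def algebra_simps)
    moreover have "0 \<le> 1 - exp (- wd * (t - t0))" using q by simp
    moreover have "0 < exp (- wd * (t - t0)) * exp (- d0)" using q by simp
    ultimately show ?thesis by linarith
  qed
  have Dd: "(d has_real_derivative (- wd * (exp (d t) - 1))) (at t within {t0..})" if t: "t0 \<le> t" for t
  proof -
    have "(d has_real_derivative - (((exp (- d0) - 1) * (exp (- wd * (t - t0)) * (- wd * 1))) / u t)) (at t within {t0..})"
      unfolding d_def[abs_def] u_def[abs_def] using upos[OF t] unfolding u_def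
      by (auto intro!: derivative_eq_intros)
    moreover have "- (((exp (- d0) - 1) * (exp (- wd * (t - t0)) * (- wd * 1))) / u t) = - wd * (exp (d t) - 1)"
    proof -
      have e: "exp (d t) = 1 / u t" using upos[OF t] by (simp add: d_def exp_minus inverse_eq_divide)
      have Peq: "(exp (- d0) - 1) * exp (- wd * (t - t0)) = u t - 1" by (simp add: u_def)
      have "(exp (- d0) - 1) * (exp (- wd * (t - t0)) * (- wd * 1)) = - wd * ((exp (- d0) - 1) * exp (- wd * (t - t0)))"
        by (simp only: mult_ac mult_1_right mult_minus_left mult_minus_right)
      also have "\<dots> = - wd * (u t - 1)" unfolding Peq ..
      finally have "- (((exp (- d0) - 1) * (exp (- wd * (t - t0)) * (- wd * 1))) / u t) = wd * (u t - 1) / u t" by simp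
      also have "\<dots> = - wd * (1 / u t - 1)" using upos[OF t] by (simp add: field_simps)
      finally show ?thesis unfolding e .
    qed
    ultimately show ?thesis by simp
  qed
  have d0: "d t0 = d0" by (simp add: d_def u_def)
  have dabs: "\<bar>d t\<bar> \<le> \<bar>d0\<bar>" if "t0 \<le> t" for t using d_bounds(1)[OF Dd pos(3) that] d0 by simp
  define E where "E = exp \<bar>d0\<bar>"
  have dE: "exp (d t) \<le> E" if "t0 \<le> t" for t using dabs[OF that] by (simp add: E_def)
  have dc: "continuous_on {t0..b} d" for b
    using cont_from_deriv[of t0 d, OF Dd[unfolded has_real_derivative_iff_has_vector_derivative]] by simp
  \<comment> \<open>z\<close>
  define L where "L t v = (J0 w + exp (d t) *\<^sub>R LambdaT a) *v v" for t v
  have Lsplit: "L t v = J0 w *v v + exp (d t) *\<^sub>R (LambdaT a *v v)" for t v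
    by (simp add: L_def vec_eq_iff forall_2 J0_def LambdaT_def matrix_vector_mult_def sum_2)
  have "\<exists>z. z t0 = z0 \<and> (\<forall>t\<ge>t0. (z has_vector_derivative L t (z t)) (at t within {t0..}))"
  proof (rule lin_exist)
    show "linear (L t)" for t unfolding L_def by simp
    show "norm (L t v) \<le> (2*w + E * a / 2) * norm v" if "t0 \<le> t" for t v
    proof -
      have "norm (L t v) \<le> \<bar>(L t v) $ 1\<bar> + \<bar>(L t v) $ 2\<bar>" using norm_le_l1_cart[of "L t v"] by (simp add: sum_2)
      also have "\<dots> = \<bar>w * v$2\<bar> + \<bar>- w * v$1 - exp (d t) * a / 2 * v$2\<bar>" by (simp add: L_def mv_comp)
      also have "\<dots> \<le> w * \<bar>v$2\<bar> + (w * \<bar>v$1\<bar> + exp (d t) * a / 2 * \<bar>v$2\<bar>)"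
      proof -
        have "\<bar>- w * v$1 - exp (d t) * a / 2 * v$2\<bar> \<le> \<bar>- w * v$1\<bar> + \<bar>exp (d t) * a / 2 * v$2\<bar>"
          by (rule abs_triangle_ineq4)
        moreover have "\<bar>- w * v$1\<bar> = w * \<bar>v$1\<bar>" "\<bar>exp (d t) * a / 2 * v$2\<bar> = exp (d t) * a / 2 * \<bar>v$2\<bar>"
           "\<bar>w * v$2\<bar> = w * \<bar>v$2\<bar>"
          using pos by (simp_all add: abs_mult)
        ultimately show ?thesis by linarith
      qed
      also have "\<dots> \<le> w * norm v + (w * norm v + E * a / 2 * norm v)"
        using pos dE[OF that] exp_gt_zero[of "\<bar>d0\<bar>"] component_le_norm_cart[of v 1] component_le_norm_cart[of v 2]
        by (intro add_mono mult_left_mono mult_mono) (auto simp: E_def)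
      also have "\<dots> = (2*w + E * a / 2) * norm v" by (simp add: algebra_simps)
      finally show ?thesis .
    qed
    show "0 \<le> 2*w + E * a / 2" using pos by (simp add: E_def)
    show "continuous_on {t0..b} (\<lambda>t. L t (y t))" if "continuous_on {t0..b} y" for y b
      unfolding Lsplit
      by (intro continuous_intros linear_continuous_on_compose[OF that] dc) auto
  qed
  then obtain z where z0: "z t0 = z0" and Dz: "\<And>t. t \<ge> t0 \<Longrightarrow> (z has_vector_derivative L t (z t)) (at t within {t0..})"
    by blast
  have D1: "((\<lambda>t. z t $ 1) has_real_derivative (w * z t $ 2)) (at t within {t0..})" if "t0 \<le> t" for t
    using bounded_linear.has_vector_derivative[OF bounded_linear_vec_nth Dz[OF that], of 1]
    by (simp add: has_real_derivative_iff_has_vector_derivative mv_comp L_def)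
  have D2: "((\<lambda>t. z t $ 2) has_real_derivative (- w * z t $ 1 - exp (d t) * a / 2 * z t $ 2)) (at t within {t0..})" if "t0 \<le> t" for t
    using bounded_linear.has_vector_derivative[OF bounded_linear_vec_nth Dz[OF that], of 2]
    by (simp add: has_real_derivative_iff_has_vector_derivative mv_comp L_def)
  have Nb: "(z t $ 1)^2 + (z t $ 2)^2 \<le> (z t0 $ 1)^2 + (z t0 $ 2)^2" if "t0 \<le> t" for t
    by (rule z_mono[where A="\<lambda>t. exp (d t) * a / 2", OF D1 D2]) (use that pos in auto)
  define N0 where "N0 = (z t0 $ 1)^2 + (z t0 $ 2)^2"
  have zc: "continuous_on {t0..b} z" for b by (rule cont_from_deriv[OF Dz])
  \<comment> \<open>r\<close>
  define q where "q t = - H * (a/2) * exp (d t) * (z t $ 2)^2" for t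
  have qeq: "q t = H * (z t \<bullet> L t (z t))" for t
  proof -
    have "z t \<bullet> L t (z t) = -(a/2)*exp(d t)*(z t$2)^2" unfolding L_def
      by (simp only: inner2 mv_comp) (simp add: algebra_simps power2_eq_square)
    then show ?thesis by (simp add: q_def)
  qed
  define Qb where "Qb = H * (a/2) * E * N0"
  have qb: "\<bar>q t\<bar> \<le> Qb" if "t0 \<le> t" for t
  proof -
    have "\<bar>q t\<bar> = H * (a/2) * exp (d t) * (z t $ 2)^2" using pos by (simp add: q_def abs_mult)
    also have "\<dots> \<le> H * (a/2) * E * N0"
    proof (intro mult_mono)
      show "(z t $ 2)^2 \<le> N0" using Nb[OF that] zero_le_power2[of "z t $ 1"] unfolding N0_def by linarith
    qed (use pos dE[OF that] in \<open>auto simp: E_def\<close>)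
    finally show ?thesis by (simp add: Qb_def)
  qed
  have Qb0: "0 \<le> Qb" using pos by (simp add: Qb_def E_def N0_def)
  have qc: "continuous_on {t0..b} q" for b
    unfolding q_def
    by (intro continuous_intros dc bounded_linear.continuous_on[OF bounded_linear_vec_nth zc])
  define L2 where "L2 t p = (- h * fst p + q t * snd p, 0::real)" for t and p :: "real \<times> real"
  have "\<exists>y. y t0 = (r0, 1) \<and> (\<forall>t\<ge>t0. (y has_vector_derivative L2 t (y t)) (at t within {t0..}))"
  proof (rule lin_exist)
    show "linear (L2 t)" for t
      by (rule linearI) (auto simp: L2_def algebra_simps)
    show "norm (L2 t p) \<le> (h + Qb) * norm p" if "t0 \<le> t" for t p
    proof -
      have "norm (L2 t p) = \<bar>- h * fst p + q t * snd p\<bar>" by (simp add: L2_def)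
      also have "\<dots> \<le> h * \<bar>fst p\<bar> + \<bar>q t\<bar> * \<bar>snd p\<bar>" 
      proof -
        have "\<bar>- h * fst p + q t * snd p\<bar> \<le> \<bar>- h * fst p\<bar> + \<bar>q t * snd p\<bar>" by (rule abs_triangle_ineq)
        moreover have "\<bar>- h * fst p\<bar> = h * \<bar>fst p\<bar>" "\<bar>q t * snd p\<bar> = \<bar>q t\<bar> * \<bar>snd p\<bar>"
          using pos by (simp_all add: abs_mult)
        ultimately show ?thesis by linarith
      qed
      also have "\<dots> \<le> h * norm p + Qb * norm p"
        using pos qb[OF that] nfst[of p] nsnd[of p] Qb0 by (intro add_mono mult_left_mono mult_mono) auto
      finally show ?thesis by (simp add: algebra_simps)
    qed
    show "0 \<le> h + Qb" using pos Qb0 by simp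
    show "continuous_on {t0..b} (\<lambda>t. L2 t (y t))" if "continuous_on {t0..b} y" for y b
      unfolding L2_def by (intro continuous_intros qc that)
  qed
  then obtain y where y0: "y t0 = (r0, 1)" and Dy: "\<And>t. t \<ge> t0 \<Longrightarrow> (y has_vector_derivative L2 t (y t)) (at t within {t0..})"
    by blast
  have Ds: "((\<lambda>t. snd (y t)) has_real_derivative 0) (at t within {t0..})" if "t0 \<le> t" for t
    using bounded_linear.has_vector_derivative[OF bounded_linear_snd Dy[OF that]]
    by (simp add: has_real_derivative_iff_has_vector_derivative L2_def)
  have s1: "snd (y t) = 1" if "t0 \<le> t" for t
    using const_of_deriv0[where W="\<lambda>t. snd (y t)", OF Ds that] y0 by simp
  have Dr: "((\<lambda>t. fst (y t)) has_vector_derivative (- h * fst (y t) + q t)) (at t within {t0..})" if "t0 \<le> t" for t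
    using bounded_linear.has_vector_derivative[OF bounded_linear_fst Dy[OF that]] s1[OF that]
    by (simp add: L2_def)
  define x where "x t = (fst (y t), z t, d t)" for t
  have "x t0 = x0" by (simp add: x_def y0 z0 d0 x0)
  moreover have "is_solution (sysf w a wd h H) t0 x"
    unfolding is_solution_def
  proof (intro allI impI)
    fix t assume t: "t0 \<le> t"
    have val: "sysf w a wd h H (x t) = (- h * fst (y t) + q t, L t (z t), - wd * (exp (d t) - 1))"
      unfolding x_def sysf_def by (simp only: split mv_comp' qeq L_def)
    show "(x has_vector_derivative sysf w a wd h H (x t)) (at t within {t0..})"
      unfolding val unfolding x_def[abs_def]
      using Dr[OF t] Dz[OF t] Dd[OF t, unfolded has_real_derivative_iff_has_vector_derivative]
      by (intro has_vector_derivative_Pair)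
  qed
  ultimately show ?thesis by blast
qed

lemma lim1: fixes k C :: real assumes "k > 0" shows "((\<lambda>s. C * exp (- k * s)) \<longlongrightarrow> 0) at_top"
  using assms by real_asymp

lemma ev_small: fixes k C e :: real assumes "k > 0" "e > 0"
  shows "\<forall>\<^sub>F s in at_top. C * exp (- k * s) < e"
  using order_tendstoD(2)[OF lim1[OF assms(1), of C] assms(2)] .

lemma ev_small_sqrt: fixes k C e :: real assumes "k > 0" "e > 0"
  shows "\<forall>\<^sub>F s in at_top. sqrt (C * exp (- k * s)) < e"
proof -
  have "((\<lambda>s. sqrt (C * exp (- k * s))) \<longlongrightarrow> sqrt 0) at_top"
    by (rule tendsto_real_sqrt[OF lim1[OF assms(1)]])
  then show ?thesis using order_tendstoD(2)[OF _ assms(2)] by simp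
qed

theorem mainTheorem5:
  fixes \<omega>0 \<alpha> \<omega>d h H :: real
  assumes "\<omega>0 > 0" "\<alpha> > 0" "\<omega>d > 0" "h > 0" "H > 0"
  shows "GUAS (sysf \<omega>0 \<alpha> \<omega>d h H)"
proof -
  note pos = assms
  define f where "f = sysf \<omega>0 \<alpha> \<omega>d h H"
  have f0: "f 0 = 0" by (simp add: f_def sysf_def zero_prod_def)
  have ex: "\<forall>t0 x0. \<exists>x. x t0 = x0 \<and> is_solution f t0 x"
    unfolding f_def using exist_sol[OF pos] by blast
  have stab: "\<forall>\<epsilon>>0. \<exists>\<delta>>0. \<forall>t0 x. is_solution f t0 x \<and> norm (x t0) < \<delta> \<longrightarrow> (\<forall>t\<ge>t0. norm (x t) < \<epsilon>)"
  proof (intro allI impI)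
    fix \<epsilon> :: real assume e: "\<epsilon> > 0"
    define \<delta> where "\<delta> = min 1 (\<epsilon> / (4 + 2*H))"
    have dp: "\<delta> > 0" using e pos by (simp add: \<delta>_def)
    have "\<forall>t0 x. is_solution f t0 x \<and> norm (x t0) < \<delta> \<longrightarrow> (\<forall>t\<ge>t0. norm (x t) < \<epsilon>)"
    proof (intro allI impI)
      fix t0 x t assume A: "is_solution f t0 x \<and> norm (x t0) < \<delta>" and t: "t0 \<le> t"
      define n0 where "n0 = norm (x t0)"
      have n0: "0 \<le> n0" "n0 < \<delta>" using A by (auto simp: n0_def)
      have b: "norm (x t) \<le> 3 * n0 + 3*H/2 * n0^2"
        using sol_est(1)[OF pos, of t0 x t] A t unfolding f_def n0_def by blast
      have n1: "n0 \<le> 1" using n0 by (simp add: \<delta>_def)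
      have "n0 * n0 \<le> n0 * 1" using n0 n1 by (intro mult_left_mono) auto
      then have "n0^2 \<le> n0" by (simp add: power2_eq_square)
      then have "3*H/2 * n0^2 \<le> 3*H/2 * n0" using pos by simp
      moreover have "n0 < \<epsilon> / (4 + 2*H)" using n0 by (simp add: \<delta>_def)
      then have "n0 * (4 + 2*H) < \<epsilon>" using pos by (simp add: pos_less_divide_eq)
      moreover have "0 \<le> H * n0" using pos n0 by simp
      moreover have "3*H/2 * n0^2 = 3/2 * (H * n0^2)" "3*H/2 * n0 = 3/2 * (H * n0)" "n0 * (4 + 2*H) = 4 * n0 + 2 * (H * n0)"
        by (simp_all add: algebra_simps)
      ultimately show "norm (x t) < \<epsilon>" using b n0 by linarith
    qed
    then show "\<exists>\<delta>>0. \<forall>t0 x. is_solution f t0 x \<and> norm (x t0) < \<delta> \<longrightarrow> (\<forall>t\<ge>t0. norm (x t) < \<epsilon>)"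
      using dp by blast
  qed
  have bdd: "\<forall>c>0. \<exists>B. \<forall>t0 x. is_solution f t0 x \<and> norm (x t0) < c \<longrightarrow> (\<forall>t\<ge>t0. norm (x t) \<le> B)"
  proof (intro allI impI)
    fix c :: real assume c: "c > 0"
    have "\<forall>t0 x. is_solution f t0 x \<and> norm (x t0) < c \<longrightarrow> (\<forall>t\<ge>t0. norm (x t) \<le> 3 * c + 3*H/2 * c^2)"
    proof (intro allI impI)
      fix t0 x t assume A: "is_solution f t0 x \<and> norm (x t0) < c" and t: "t0 \<le> t"
      have b: "norm (x t) \<le> 3 * norm (x t0) + 3*H/2 * (norm (x t0))^2"
        using sol_est(1)[OF pos, of t0 x t] A t unfolding f_def by blast
      have "(norm (x t0))^2 \<le> c^2" using A by (intro power_mono) auto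
      then have "3*H/2 * (norm (x t0))^2 \<le> 3*H/2 * c^2" using pos by simp
      then show "norm (x t) \<le> 3 * c + 3*H/2 * c^2" using b A by linarith
    qed
    then show "\<exists>B. \<forall>t0 x. is_solution f t0 x \<and> norm (x t0) < c \<longrightarrow> (\<forall>t\<ge>t0. norm (x t) \<le> B)" by blast
  qed
  have attr: "\<forall>c>0. \<forall>\<eta>>0. \<exists>T\<ge>0. \<forall>t0 x. is_solution f t0 x \<and> norm (x t0) < c \<longrightarrow> (\<forall>t\<ge>t0 + T. norm (x t) < \<eta>)"
  proof (intro allI impI)
    fix c \<eta> :: real assume c: "c > 0" and eta: "\<eta> > 0"
    define lam where "lam = zlam \<omega>0 \<alpha> c"
    have lp: "lam > 0" using zlam_pos[OF pos(1,2)] by (simp add: lam_def)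
    have "\<forall>\<^sub>F s in at_top. (exp c + 1) * exp c * exp (- \<omega>d * s) < \<eta>/3
        \<and> sqrt (5/3 * c^2 * exp (- lam * s)) < \<eta>/3 \<and> H * (5/3 * c^2) * exp (- lam * s) < \<eta>/6"
      using ev_small[OF pos(3), of "\<eta>/3" "(exp c + 1) * exp c"] ev_small_sqrt[OF lp, of "\<eta>/3" "5/3 * c^2"]
        ev_small[OF lp, of "\<eta>/6" "H * (5/3 * c^2)"] eta
      by (auto intro: eventually_conj)
    then obtain T1 where T1: "\<And>s. s \<ge> T1 \<Longrightarrow> (exp c + 1) * exp c * exp (- \<omega>d * s) < \<eta>/3
        \<and> sqrt (5/3 * c^2 * exp (- lam * s)) < \<eta>/3 \<and> H * (5/3 * c^2) * exp (- lam * s) < \<eta>/6"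
      unfolding eventually_at_top_linorder by blast
    have "\<forall>\<^sub>F s in at_top. (c + 2*H*c^2) * exp (- h * s) < \<eta>/6"
      using ev_small[OF pos(4), of "\<eta>/6"] eta by simp
    then obtain T2 where T2: "\<And>s. s \<ge> T2 \<Longrightarrow> (c + 2*H*c^2) * exp (- h * s) < \<eta>/6"
      unfolding eventually_at_top_linorder by blast
    define T where "T = max 0 T1 + max 0 T2"
    have "\<forall>t0 x. is_solution f t0 x \<and> norm (x t0) < c \<longrightarrow> (\<forall>t\<ge>t0 + T. norm (x t) < \<eta>)"
    proof (intro allI impI)
      fix t0 x t assume A: "is_solution f t0 x \<and> norm (x t0) < c" and t: "t0 + T \<le> t"
      define t1 where "t1 = t0 + max 0 T1"
      have t1: "t0 \<le> t1" "t1 \<le> t" using t by (auto simp: t1_def T_def)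
      have b: "norm (x t) \<le> (exp c + 1) * exp c * exp (- \<omega>d * (t - t0)) + sqrt (5/3 * c^2 * exp (- lam * (t - t0)))
          + ((c + 2*H*c^2) * exp (- h * (t - t1)) + H * (5/3 * c^2 * exp (- lam * (t1 - t0))))"
        using sol_est(2)[OF pos, of t0 x c t1 t] A t1 unfolding f_def lam_def by blast
      have s1: "t - t0 \<ge> T1" "t1 - t0 \<ge> T1" "t - t1 \<ge> T2" using t by (auto simp: t1_def T_def)
      have "(exp c + 1) * exp c * exp (- \<omega>d * (t - t0)) < \<eta>/3" "sqrt (5/3 * c^2 * exp (- lam * (t - t0))) < \<eta>/3"
        using T1[OF s1(1)] by auto
      moreover have "H * (5/3 * c^2 * exp (- lam * (t1 - t0))) < \<eta>/6" using T1[OF s1(2)] by (simp add: mult_ac)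
      moreover have "(c + 2*H*c^2) * exp (- h * (t - t1)) < \<eta>/6" using T2[OF s1(3)] .
      ultimately show "norm (x t) < \<eta>" using b by linarith
    qed
    moreover have "T \<ge> 0" by (simp add: T_def)
    ultimately show "\<exists>T\<ge>0. \<forall>t0 x. is_solution f t0 x \<and> norm (x t0) < c \<longrightarrow> (\<forall>t\<ge>t0 + T. norm (x t) < \<eta>)" by blast
  qed
  show ?thesis unfolding GUAS_def f_def[symmetric] using f0 ex stab bdd attr by (intro conjI)
qed
end
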